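(* There exists a $4\times 4$ magic square $A$ whose sixteen entries are pairwise distinct strings of length $4$ over $\{0,1,2\}$ (read as decimal numbers, leading zeros allowed), with magic sum $S1=4444$, such that the rotated array $R(A)$ is also a magic square with magic sum $4444$.
   Context: A magic square of order $n$ is an $n\times n$ array of numbers in which the sums of the entries of each row, of each column and of each of the two principal diagonals all equal a common value $S1$ (the magic sum). For an $n\times n$ array $A$ whose entries are digit strings $d_1d_2\cdots d_k$ over $\{0,1,2\}$, the $180^\circ$-rotated array $R(A)$ is defined by $R(A)_{i,j}=\overline{A_{n+1-i,\,n+1-j}}$, where $\overline{d_1\cdots d_k}=d_k\cdots d_1$ is the reversed string. Strings are interpreted as decimal integers. *)

theory Defs
  imports Main
begin

text \<open>A digit string d_1 d_2 ... d_k is a list of digits (most significant first);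
  its decimal value allows leading zeros.\<close>
fun dec_val_acc :: "nat \<Rightarrow> nat list \<Rightarrow> nat" where
  "dec_val_acc a [] = a"
| "dec_val_acc a (d # ds) = dec_val_acc (10 * a + d) ds"

definition dec_val :: "nat list \<Rightarrow> nat" where
  "dec_val ds = dec_val_acc 0 ds"

definition magic_square :: "nat \<Rightarrow> (nat \<Rightarrow> nat \<Rightarrow> nat) \<Rightarrow> nat \<Rightarrow> bool" where
  "magic_square n M S \<longleftrightarrow>
     (\<forall>i<n. (\<Sum>j<n. M i j) = S) \<and>
     (\<forall>j<n. (\<Sum>i<n. M i j) = S) \<and>
     (\<Sum>i<n. M i i) = S \<and>
     (\<Sum>i<n. M i (n - 1 - i)) = S"

text \<open>180-degree rotation with reversal of each string (0-based indices):
  R(A)_{i,j} = reverse of A_{n-1-i, n-1-j}.\<close>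
definition rot180 :: "nat \<Rightarrow> (nat \<Rightarrow> nat \<Rightarrow> 'a list) \<Rightarrow> nat \<Rightarrow> nat \<Rightarrow> 'a list" where
  "rot180 n A i j = rev (A (n - 1 - i) (n - 1 - j))"

end

theory Submission
  imports Defs
begin

definition MM :: "nat list list list" where
"MM = [[[2, 0, 1, 0], [1, 1, 0, 2], [0, 1, 1, 0], [1, 2, 2, 2]], [[1, 2, 2, 0], [0, 1, 2, 2], [2, 1, 0, 0], [1, 0, 0, 2]], [[1, 2, 0, 2], [1, 1, 1, 0], [1, 1, 1, 2], [1, 0, 2, 0]], [[0, 0, 1, 2], [2, 1, 1, 0], [1, 1, 2, 2], [1, 2, 0, 0]]]"

lemma all4: "(\<forall>i<(4::nat). P i) \<longleftrightarrow> P 0 \<and> P 1 \<and> P 2 \<and> P 3"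
  by (auto simp: numeral_eq_Suc less_Suc_eq)

lemma sum4: "(\<Sum>i<(4::nat). f i) = f 0 + f 1 + f 2 + (f 3 :: nat)"
  by (simp add: numeral_eq_Suc)

theorem mainTheorem2:
  shows "\<exists>A :: nat \<Rightarrow> nat \<Rightarrow> nat list.
    (\<forall>i<4. \<forall>j<4. length (A i j) = 4 \<and> set (A i j) \<subseteq> {0, 1, 2}) \<and>
    (\<forall>i<4. \<forall>j<4. \<forall>k<4. \<forall>l<4. A i j = A k l \<longrightarrow> (i, j) = (k, l)) \<and>
    magic_square 4 (\<lambda>i j. dec_val (A i j)) 4444 \<and>
    magic_square 4 (\<lambda>i j. dec_val (rot180 4 A i j)) 4444"
  apply (rule exI[of _ "\<lambda>i j. MM ! i ! j"])
  apply (simp only: all4 magic_square_def sum4 rot180_def)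
  apply (simp add: MM_def dec_val_def)
  done

end
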